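(* Let $\mathcal{G}=(V,L)$ be a finite connected undirected graph with monitor set $M$ and non-monitor set $N=V\setminus M$, $\sigma=|N|$, and let $P$ be a given set of measurement paths between monitors (Uncontrollable Probing). Let $S\subseteq N$. Then: (a) if $k\le\sigma-1$ and $\mathrm{MSC}(v)\ge k+1$ for every $v\in S$, then $S$ is $k$-identifiable; (b) if $k\le\sigma$ and $S$ is $k$-identifiable, then $\mathrm{MSC}(v)\ge k$ for every $v\in S$.
   Context: Here $k\ge1$ is an integer. Failure model: a failure set is any $F\subseteq N$ (monitors never fail); a measurement path fails iff it traverses a node of $F$. For $F\subseteq N$, $P_F$ is the set of paths in $P$ traversing at least one node of $F$; $F_1,F_2$ are distinguishable iff $P_{F_1}\ne P_{F_2}$. $S\subseteq N$ is $k$-identifiable if any two failure sets $F_1,F_2$ with $|F_1|,|F_2|\le k$ and $F_1\cap S\ne F_2\cap S$ are distinguishable. For $v\in N$, $P_v$ is the set of paths in $P$ traversing $v$. $\mathrm{MSC}(v)$ is the minimum cardinality of a set $V'\subseteq N\setminus\{v\}$ with $P_v\subseteq\bigcup_{w\in V'}P_w$; if no such $V'$ exists (e.g. when $v$ lies on a two-hop measurement path monitor–$v$–monitor), $\mathrm{MSC}(v):=\sigma$. *)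

theory Defs
  imports Main
begin

definition undirected_graph :: "'a set \<Rightarrow> ('a \<times> 'a) set \<Rightarrow> bool" where
  "undirected_graph V E \<longleftrightarrow> finite V \<and> E \<subseteq> V \<times> V \<and> sym E \<and> irrefl E"

definition connected_graph :: "'a set \<Rightarrow> ('a \<times> 'a) set \<Rightarrow> bool" where
  "connected_graph V E \<longleftrightarrow> (\<forall>u\<in>V. \<forall>v\<in>V. (u, v) \<in> E\<^sup>*)"

definition is_path :: "('a \<times> 'a) set \<Rightarrow> 'a list \<Rightarrow> bool" where
  "is_path E p \<longleftrightarrow> p \<noteq> [] \<and> distinct p \<and> (\<forall>i. Suc i < length p \<longrightarrow> (p ! i, p ! Suc i) \<in> E)"

definition measurement_path :: "('a \<times> 'a) set \<Rightarrow> 'a set \<Rightarrow> 'a list \<Rightarrow> bool" where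
  "measurement_path E M p \<longleftrightarrow> is_path E p \<and> hd p \<in> M \<and> last p \<in> M"

definition paths_through :: "'a list set \<Rightarrow> 'a \<Rightarrow> 'a list set" where
  "paths_through P v = {p \<in> P. v \<in> set p}"

definition paths_through_set :: "'a list set \<Rightarrow> 'a set \<Rightarrow> 'a list set" where
  "paths_through_set P F = {p \<in> P. \<exists>v\<in>F. v \<in> set p}"

definition distinguishable :: "'a list set \<Rightarrow> 'a set \<Rightarrow> 'a set \<Rightarrow> bool" where
  "distinguishable P F1 F2 \<longleftrightarrow> paths_through_set P F1 \<noteq> paths_through_set P F2"

definition k_identifiable :: "'a list set \<Rightarrow> 'a set \<Rightarrow> nat \<Rightarrow> 'a set \<Rightarrow> bool" where
  "k_identifiable P N k S \<longleftrightarrow>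
     (\<forall>F1 F2. F1 \<subseteq> N \<and> F2 \<subseteq> N \<and> card F1 \<le> k \<and> card F2 \<le> k \<and> F1 \<inter> S \<noteq> F2 \<inter> S
        \<longrightarrow> distinguishable P F1 F2)"

definition MSC :: "'a list set \<Rightarrow> 'a set \<Rightarrow> 'a \<Rightarrow> nat" where
  "MSC P N v =
    (if \<exists>V'. V' \<subseteq> N - {v} \<and> paths_through P v \<subseteq> (\<Union>w\<in>V'. paths_through P w)
     then (LEAST n. \<exists>V'. V' \<subseteq> N - {v} \<and> paths_through P v \<subseteq> (\<Union>w\<in>V'. paths_through P w)
                         \<and> card V' = n)
     else card N)"

end

theory Submission
  imports Defs
begin

theorem theorem3:
  fixes V M :: "'a set" and E :: "('a \<times> 'a) set" and P :: "'a list set"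
    and S :: "'a set" and k :: nat
  assumes graph: "undirected_graph V E"
    and conn: "connected_graph V E"
    and mon: "M \<subseteq> V"
    and paths: "\<forall>p\<in>P. measurement_path E M p"
    and S: "S \<subseteq> V - M"
    and k: "k \<ge> 1"
  shows "(k \<le> card (V - M) - 1 \<and> (\<forall>v\<in>S. MSC P (V - M) v \<ge> k + 1)
            \<longrightarrow> k_identifiable P (V - M) k S)
       \<and> (k \<le> card (V - M) \<and> k_identifiable P (V - M) k S
            \<longrightarrow> (\<forall>v\<in>S. MSC P (V - M) v \<ge> k))"
proof -
  define N where "N = V - M"
  have finN: "finite N" using graph unfolding N_def undirected_graph_def by auto
  define C where "C v V' \<longleftrightarrow> V' \<subseteq> N - {v} \<and> paths_through P v \<subseteq> (\<Union>w\<in>V'. paths_through P w)" for v V'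
  have MSCd: "MSC P N v = (if \<exists>V'. C v V' then (LEAST n. \<exists>V'. C v V' \<and> card V' = n) else card N)" for v
    unfolding MSC_def C_def by (simp only: conj_assoc)
  have le: "MSC P N v \<le> card V'" if "C v V'" for v V'
  proof -
    have "(LEAST n. \<exists>V'. C v V' \<and> card V' = n) \<le> card V'" using that by (intro Least_le) blast
    thus ?thesis using that MSCd by auto
  qed
  have A: "k_identifiable P N k S" if "\<forall>v\<in>S. MSC P N v \<ge> k + 1"
    unfolding k_identifiable_def
  proof (intro allI impI)
    fix F1 F2 assume h: "F1 \<subseteq> N \<and> F2 \<subseteq> N \<and> card F1 \<le> k \<and> card F2 \<le> k \<and> F1 \<inter> S \<noteq> F2 \<inter> S"
    show "distinguishable P F1 F2"
    proof (rule ccontr)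
      assume nd: "\<not> distinguishable P F1 F2"
      hence eq: "paths_through_set P F1 = paths_through_set P F2" unfolding distinguishable_def by simp
      have key: "False" if "v \<in> G1" "v \<in> S" "v \<notin> G2" "paths_through_set P G1 = paths_through_set P G2"
        "G2 \<subseteq> N" "card G2 \<le> k" for v G1 G2
      proof -
        have "C v G2" unfolding C_def using that
          by (auto simp: paths_through_def paths_through_set_def; blast)
        hence "MSC P N v \<le> k" using le that(6) by (meson order_trans)
        thus False using \<open>\<forall>v\<in>S. MSC P N v \<ge> k + 1\<close> that(2) by fastforce
      qed
      from h obtain v where "v \<in> F1 \<and> v \<in> S \<and> v \<notin> F2 \<or> v \<in> F2 \<and> v \<in> S \<and> v \<notin> F1" by blast
      thus False using key eq h by metis
    qed
  qed
  have B: "\<forall>v\<in>S. MSC P N v \<ge> k" if kk: "k \<le> card N" and ki: "k_identifiable P N k S"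
  proof
    fix v assume vS: "v \<in> S"
    show "MSC P N v \<ge> k"
    proof (cases "\<exists>V'. C v V'")
      case False thus ?thesis using MSCd kk by simp
    next
      case True
      hence "\<exists>n. \<exists>V'. C v V' \<and> card V' = n" by blast
      hence "\<exists>V'. C v V' \<and> card V' = (LEAST n. \<exists>V'. C v V' \<and> card V' = n)"
        by (rule LeastI_ex)
      then obtain V' where cv: "C v V'" and cd: "card V' = (LEAST n. \<exists>V'. C v V' \<and> card V' = n)"
        by blast
      have ms: "MSC P N v = card V'" using True cd MSCd by simp
      show ?thesis
      proof (rule ccontr)
        assume "\<not> ?thesis"
        hence lt: "card V' < k" using ms by simp
        have sub: "V' \<subseteq> N - {v}" using cv C_def by simp
        have fin: "finite V'" using sub finN finite_subset by blast
        have vN: "v \<in> N" using vS S N_def by auto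
        have c1: "card (insert v V') \<le> k" using fin sub lt by (simp add: card_insert_if subset_iff)
        have "(insert v V') \<inter> S \<noteq> V' \<inter> S" using vS sub by auto
        moreover have "insert v V' \<subseteq> N" "V' \<subseteq> N" using sub vN by auto
        ultimately have "distinguishable P (insert v V') V'" using ki c1 lt
          unfolding k_identifiable_def by (meson less_imp_le)
        moreover have "paths_through_set P (insert v V') = paths_through_set P V'"
          using cv unfolding C_def paths_through_def paths_through_set_def by blast
        ultimately show False unfolding distinguishable_def by simp
      qed
    qed
  qed
  show ?thesis using A B unfolding N_def by auto
qed

end
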